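(* There is an absolute constant $C>0$ such that the following holds. Let $n\ge 2$ and let $f:\{0,1\}^n\to\{0,1\}$ be a read-once DNF formula. Under unit costs ($c_i=1$ for all $i$) and the uniform distribution ($p_i=1/2$ for all $i$), there is a non-adaptive strategy $S$ with $$\mathrm{cost}_{c,p}(f,S)\le C\log n\cdot \mathsf{OPT}_{\mathcal A}(f,c,p).$$
   Context: Stochastic Boolean Function Evaluation (SBFE) setup: $f:\{0,1\}^n\to\{0,1\}$ is a known Boolean function, $c\in\mathbb{R}_{>0}^n$ a cost vector and $p\in(0,1)^n$ a probability vector. The unknown input $x\in\{0,1\}^n$ is random with independent coordinates and $\Pr(x_i=1)=p_i$ (written $x\sim p$). The value $x_i$ can only be learned by testing variable $i$, at cost $c_i$. A strategy tests variables sequentially until $f(x)$ is determined, i.e. until $f(x')=f(x)$ for every $x'\in\{0,1\}^n$ agreeing with $x$ on all tested coordinates. An adaptive strategy is a decision tree (the next test may depend on previous outcomes); a non-adaptive strategy is a fixed permutation of $[n]$, with variables tested in that order until $f(x)$ is determined. $\mathrm{cost}_c(f,x,S)$ is the total cost of the tests performed by $S$ on input $x$, and $\mathrm{cost}_{c,p}(f,S)=\mathbb{E}_{x\sim p}[\mathrm{cost}_c(f,x,S)]$. $\mathsf{OPT}_{\mathcal A}(f,c,p)$ (resp. $\mathsf{OPT}_{\mathcal N}(f,c,p)$) is the minimum of $\mathrm{cost}_{c,p}(f,S)$ over all adaptive (resp. non-adaptive) strategies $S$. A DNF formula is a disjunction $T_1\vee\dots\vee T_m$ of terms, each a conjunction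 of literals (variables or negated variables); it is read-once if no variable is negated and distinct terms contain disjoint sets of variables. *)

theory Defs
  imports Complex_Main
begin

text \<open>Inputs x in {0,1}^n, variables indexed 0..n-1, encoded as functions
  nat => bool that are False outside {..<n}.\<close>
definition inputs :: "nat \<Rightarrow> (nat \<Rightarrow> bool) set" where
  "inputs n = {x. \<forall>i\<ge>n. \<not> x i}"

definition prob :: "nat \<Rightarrow> (nat \<Rightarrow> real) \<Rightarrow> (nat \<Rightarrow> bool) \<Rightarrow> real" where
  "prob n p x = (\<Prod>i<n. if x i then p i else 1 - p i)"

definition expect :: "nat \<Rightarrow> (nat \<Rightarrow> real) \<Rightarrow> ((nat \<Rightarrow> bool) \<Rightarrow> real) \<Rightarrow> real" where
  "expect n p g = (\<Sum>x\<in>inputs n. prob n p x * g x)"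

definition determined :: "nat \<Rightarrow> ((nat \<Rightarrow> bool) \<Rightarrow> bool) \<Rightarrow> nat set \<Rightarrow> (nat \<Rightarrow> bool) \<Rightarrow> bool" where
  "determined n f A x = (\<forall>y\<in>inputs n. (\<forall>i\<in>A. y i = x i) \<longrightarrow> f y = f x)"

text \<open>Adaptive strategies: decision trees. Node i l r tests variable i and
  continues in l if x_i = 0 and in r if x_i = 1; Leaf means stop.\<close>
datatype dtree = Leaf | Node nat dtree dtree

fun dcost :: "(nat \<Rightarrow> real) \<Rightarrow> dtree \<Rightarrow> (nat \<Rightarrow> bool) \<Rightarrow> real" where
  "dcost c Leaf x = 0"
| "dcost c (Node i l r) x = c i + dcost c (if x i then r else l) x"

fun dtested :: "dtree \<Rightarrow> (nat \<Rightarrow> bool) \<Rightarrow> nat set" where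
  "dtested Leaf x = {}"
| "dtested (Node i l r) x = insert i (dtested (if x i then r else l) x)"

fun dvars :: "dtree \<Rightarrow> nat set" where
  "dvars Leaf = {}"
| "dvars (Node i l r) = insert i (dvars l \<union> dvars r)"

definition valid_tree :: "nat \<Rightarrow> ((nat \<Rightarrow> bool) \<Rightarrow> bool) \<Rightarrow> dtree \<Rightarrow> bool" where
  "valid_tree n f T = (dvars T \<subseteq> {..<n} \<and> (\<forall>x\<in>inputs n. determined n f (dtested T x) x))"

definition OPT_A :: "nat \<Rightarrow> ((nat \<Rightarrow> bool) \<Rightarrow> bool) \<Rightarrow> (nat \<Rightarrow> real) \<Rightarrow> (nat \<Rightarrow> real) \<Rightarrow> real" where
  "OPT_A n f c p = Inf ((\<lambda>T. expect n p (dcost c T)) ` {T. valid_tree n f T})"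

text \<open>Non-adaptive strategies: a permutation of [n] given as a list; variables
  are tested in this order until f(x) is determined.\<close>
definition is_perm :: "nat \<Rightarrow> nat list \<Rightarrow> bool" where
  "is_perm n \<sigma> = (distinct \<sigma> \<and> set \<sigma> = {..<n})"

definition nacost :: "nat \<Rightarrow> ((nat \<Rightarrow> bool) \<Rightarrow> bool) \<Rightarrow> (nat \<Rightarrow> real) \<Rightarrow> nat list \<Rightarrow> (nat \<Rightarrow> bool) \<Rightarrow> real" where
  "nacost n f c \<sigma> x =
     (let k = (LEAST k. determined n f (set (take k \<sigma>)) x) in (\<Sum>i\<leftarrow>take k \<sigma>. c i))"

definition nacost_exp :: "nat \<Rightarrow> ((nat \<Rightarrow> bool) \<Rightarrow> bool) \<Rightarrow> (nat \<Rightarrow> real) \<Rightarrow> (nat \<Rightarrow> real) \<Rightarrow> nat list \<Rightarrow> real" where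
  "nacost_exp n f c p \<sigma> = expect n p (nacost n f c \<sigma>)"

text \<open>Read-once DNF over variables [n]: a finite family of pairwise disjoint,
  nonempty sets of (unnegated) variables; f(x) = OR over terms of AND of x_i.\<close>
definition read_once_dnf :: "nat \<Rightarrow> nat set set \<Rightarrow> bool" where
  "read_once_dnf n Ts = (finite Ts \<and> (\<forall>T\<in>Ts. T \<noteq> {} \<and> T \<subseteq> {..<n}) \<and>
      (\<forall>T\<in>Ts. \<forall>T'\<in>Ts. T \<noteq> T' \<longrightarrow> T \<inter> T' = {}))"

definition dnf_eval :: "nat set set \<Rightarrow> (nat \<Rightarrow> bool) \<Rightarrow> bool" where
  "dnf_eval Ts x = (\<exists>T\<in>Ts. \<forall>i\<in>T. x i)"

end

theory Submission
  imports Defs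
begin


lemma finite_inputs: "finite (inputs n)"
proof -
  have "inputs n \<subseteq> (\<lambda>A i. i \<in> A) ` Pow {..<n}"
  proof
    fix x assume "x \<in> inputs n"
    hence "{i. x i} \<in> Pow {..<n}" by (auto simp: inputs_def not_less[symmetric])
    moreover have "x = (\<lambda>i. i \<in> {i. x i})" by auto
    ultimately show "x \<in> (\<lambda>A i. i \<in> A) ` Pow {..<n}" by blast
  qed
  thus ?thesis by (rule finite_subset) auto
qed

lemma card_inputs: "card (inputs n) = 2 ^ n"
proof -
  have "bij_betw (\<lambda>x. {i. x i}) (inputs n) (Pow {..<n})"
    unfolding bij_betw_def
  proof
    show "inj_on (\<lambda>x. {i. x i}) (inputs n)" by (auto simp: inj_on_def)
    show "(\<lambda>x. {i. x i}) ` inputs n = Pow {..<n}"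
    proof
      show "(\<lambda>x. {i. x i}) ` inputs n \<subseteq> Pow {..<n}" by (auto simp: inputs_def not_less[symmetric])
      show "Pow {..<n} \<subseteq> (\<lambda>x. {i. x i}) ` inputs n"
      proof
        fix A assume "A \<in> Pow {..<n}"
        hence "(\<lambda>i. i \<in> A) \<in> inputs n" "A = {i. (\<lambda>i. i \<in> A) i}" by (auto simp: inputs_def)
        thus "A \<in> (\<lambda>x. {i. x i}) ` inputs n" by blast
      qed
    qed
  qed
  hence "card (inputs n) = card (Pow {..<n})" by (rule bij_betw_same_card)
  thus ?thesis by (simp add: card_Pow)
qed

definition cset :: "nat \<Rightarrow> nat set \<Rightarrow> (nat \<Rightarrow> bool) \<Rightarrow> (nat \<Rightarrow> bool) set" where
  "cset n D z = {y\<in>inputs n. \<forall>i\<in>D. y i = z i}"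

definition avg :: "nat \<Rightarrow> nat set \<Rightarrow> (nat \<Rightarrow> bool) \<Rightarrow> ((nat \<Rightarrow> bool) \<Rightarrow> real) \<Rightarrow> real" where
  "avg n D z g = (\<Sum>y\<in>cset n D z. g y) / real (card (cset n D z))"

lemma finite_cset: "finite (cset n D z)"
  unfolding cset_def by (rule finite_subset[OF _ finite_inputs]) auto

lemma z_in_cset: "z \<in> inputs n \<Longrightarrow> z \<in> cset n D z"
  by (simp add: cset_def)

lemma card_cset_pos: "z \<in> inputs n \<Longrightarrow> card (cset n D z) > 0"
  using finite_cset z_in_cset card_gt_0_iff by blast

lemma inputs_upd: "z \<in> inputs n \<Longrightarrow> i < n \<Longrightarrow> z(i:=b) \<in> inputs n"
  by (auto simp: inputs_def)

lemma cset_insert_in: "i \<in> D \<Longrightarrow> cset n (insert i D) z = cset n D z"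
  by (auto simp: cset_def)

lemma cset_split:
  assumes "i \<notin> D"
  shows "cset n D z = cset n (insert i D) (z(i:=False)) \<union> cset n (insert i D) (z(i:=True))"
    "cset n (insert i D) (z(i:=False)) \<inter> cset n (insert i D) (z(i:=True)) = {}"
  using assms by (auto simp: cset_def)

lemma cset_bij:
  assumes "i \<notin> D" "i < n"
  shows "bij_betw (\<lambda>y. y(i:=True)) (cset n (insert i D) (z(i:=False))) (cset n (insert i D) (z(i:=True)))"
proof (rule bij_betw_byWitness[where f' = "\<lambda>y. y(i:=False)"])
  show "(\<lambda>y. y(i := True)) ` cset n (insert i D) (z(i := False)) \<subseteq> cset n (insert i D) (z(i := True))"
    using assms by (auto simp: cset_def inputs_def)
  show "(\<lambda>y. y(i := False)) ` cset n (insert i D) (z(i := True)) \<subseteq> cset n (insert i D) (z(i := False))"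
    using assms by (auto simp: cset_def inputs_def)
  show "\<forall>x\<in>cset n (insert i D) (z(i := False)). x(i := True, i := False) = x"
    by (auto simp: cset_def fun_eq_iff)
  show "\<forall>y\<in>cset n (insert i D) (z(i := True)). y(i := False, i := True) = y"
    by (auto simp: cset_def fun_eq_iff)
qed

lemma sum_cset_flip:
  assumes "i \<notin> D" "i < n"
  shows "(\<Sum>y\<in>cset n (insert i D) (z(i:=True)). g y) = (\<Sum>y\<in>cset n (insert i D) (z(i:=False)). g (y(i:=True)))"
  using sum.reindex_bij_betw[OF cset_bij[OF assms], of g] by simp

lemma card_cset_flip:
  assumes "i \<notin> D" "i < n"
  shows "card (cset n (insert i D) (z(i:=True))) = card (cset n (insert i D) (z(i:=False)))"
  using bij_betw_same_card[OF cset_bij[OF assms]] by simp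

lemma avg_split:
  assumes "i \<notin> D" "i < n" "z \<in> inputs n"
  shows "avg n D z g = (avg n (insert i D) (z(i:=False)) g + avg n (insert i D) (z(i:=True)) g) / 2"
proof -
  let ?C0 = "cset n (insert i D) (z(i:=False))" and ?C1 = "cset n (insert i D) (z(i:=True))"
  have c: "card ?C1 = card ?C0" by (rule card_cset_flip[OF assms(1,2)])
  have pos: "card ?C0 > 0" using card_cset_pos[OF inputs_upd[OF assms(3,2)]] by simp
  have s: "(\<Sum>y\<in>cset n D z. g y) = (\<Sum>y\<in>?C0. g y) + (\<Sum>y\<in>?C1. g y)"
    using cset_split[OF assms(1), of n z] finite_cset by (simp add: sum.union_disjoint)
  have cd: "card (cset n D z) = card ?C0 + card ?C1"
    using cset_split[OF assms(1), of n z] finite_cset by (simp add: card_Un_disjoint)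
  show ?thesis unfolding avg_def s cd c using pos by (simp add: field_simps)
qed

lemma avg_flip:
  assumes "i \<notin> D" "i < n"
  shows "avg n (insert i D) (z(i:=True)) g = avg n (insert i D) (z(i:=False)) (\<lambda>y. g (y(i:=True)))"
  unfolding avg_def sum_cset_flip[OF assms] card_cset_flip[OF assms] ..

lemma avg_cong: "(\<And>y. y \<in> cset n D z \<Longrightarrow> g y = h y) \<Longrightarrow> avg n D z g = avg n D z h"
  unfolding avg_def by (metis sum.cong)

lemma avg_const: "z \<in> inputs n \<Longrightarrow> avg n D z (\<lambda>_. c) = c"
  using card_cset_pos[of z n D] by (simp add: avg_def)

lemma avg_add: "avg n D z (\<lambda>y. g y + h y) = avg n D z g + avg n D z h"
  unfolding avg_def by (simp add: sum.distrib add_divide_distrib)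

lemma avg_cmult: "avg n D z (\<lambda>y. c * g y) = c * avg n D z g"
  unfolding avg_def by (simp add: sum_distrib_left[symmetric])

lemma avg_mono: "(\<And>y. y \<in> cset n D z \<Longrightarrow> g y \<le> h y) \<Longrightarrow> avg n D z g \<le> avg n D z h"
  unfolding avg_def by (intro divide_right_mono sum_mono) auto

lemma avg_sum: "finite A \<Longrightarrow> avg n D z (\<lambda>y. \<Sum>a\<in>A. g a y) = (\<Sum>a\<in>A. avg n D z (g a))"
  unfolding avg_def by (subst sum.swap) (simp add: sum_divide_distrib)




definition dep_on :: "nat set \<Rightarrow> ((nat \<Rightarrow> bool) \<Rightarrow> 'a) \<Rightarrow> bool" where
  "dep_on A g = (\<forall>x y. (\<forall>i\<in>A. x i = y i) \<longrightarrow> g x = g y)"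

lemma avg_nodep:
  assumes "i \<notin> D" "i < n" "dep_on A g" "i \<notin> A"
  shows "avg n (insert i D) (z(i:=True)) g = avg n (insert i D) (z(i:=False)) g"
proof -
  have "\<And>y. g (y(i:=True)) = g y" using assms(3,4) unfolding dep_on_def by (metis fun_upd_other)
  thus ?thesis using avg_flip[OF assms(1,2)] by simp
qed

lemma cset_full:
  assumes "{..<n} \<subseteq> D" "z \<in> inputs n"
  shows "cset n D z = {z}"
proof -
  have "y = z" if "y \<in> cset n D z" for y
  proof
    fix i show "y i = z i"
    proof (cases "i < n")
      case True thus ?thesis using that assms(1) by (auto simp: cset_def)
    next
      case False thus ?thesis using that assms(2) by (auto simp: cset_def inputs_def)
    qed
  qed
  thus ?thesis using z_in_cset[OF assms(2)] by blast
qed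

lemma indep_aux:
  assumes "i \<notin> D" "i < n" "z \<in> inputs n" "dep_on A g" "i \<notin> A"
    and IH0: "avg n (insert i D) (z(i:=False)) (\<lambda>y. g y * h y) = avg n (insert i D) (z(i:=False)) g * avg n (insert i D) (z(i:=False)) h"
    and IH1: "avg n (insert i D) (z(i:=True)) (\<lambda>y. g y * h y) = avg n (insert i D) (z(i:=True)) g * avg n (insert i D) (z(i:=True)) h"
  shows "avg n D z (\<lambda>y. g y * h y) = avg n D z g * avg n D z h"
proof -
  have e: "avg n (insert i D) (z(i:=True)) g = avg n (insert i D) (z(i:=False)) g"
    by (rule avg_nodep[OF assms(1,2,4,5)])
  show ?thesis
    unfolding avg_split[OF assms(1-3), of "\<lambda>y. g y * h y"] avg_split[OF assms(1-3), of g]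
      avg_split[OF assms(1-3), of h] IH0 IH1 e
    by (simp add: field_simps)
qed

lemma indep:
  assumes "z \<in> inputs n" "dep_on A g" "dep_on B h" "A \<inter> B = {}"
  shows "avg n D z (\<lambda>y. g y * h y) = avg n D z g * avg n D z h"
  using assms(1)
proof (induction "card ({..<n} - D)" arbitrary: D z rule: nat_less_induct)
  case 1
  show ?case
  proof (cases "{..<n} \<subseteq> D")
    case True
    thus ?thesis using cset_full[OF True 1(2)] by (simp add: avg_def)
  next
    case False
    then obtain i where i: "i < n" "i \<notin> D" by auto
    have lt: "card ({..<n} - insert i D) < card ({..<n} - D)"
      using i by (intro psubset_card_mono) auto
    have in0: "z(i:=False) \<in> inputs n" and in1: "z(i:=True) \<in> inputs n"
      using inputs_upd[OF 1(2) i(1)] by auto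
    note IH0 = 1(1)[rule_format, OF lt refl in0] and IH1 = 1(1)[rule_format, OF lt refl in1]
    show ?thesis
    proof (cases "i \<in> A")
      case False
      show ?thesis by (rule indep_aux[OF i(2,1) 1(2) assms(2) False IH0 IH1])
    next
      case True
      hence nB: "i \<notin> B" using assms(4) by auto
      have "avg n D z (\<lambda>y. h y * g y) = avg n D z h * avg n D z g"
        by (rule indep_aux[OF i(2,1) 1(2) assms(3) nB]) (use IH0 IH1 in \<open>simp_all add: mult.commute\<close>)
      thus ?thesis by (simp add: mult.commute)
    qed
  qed
qed

definition ind :: "nat set \<Rightarrow> (nat \<Rightarrow> bool) \<Rightarrow> real" where
  "ind T x = (if \<forall>i\<in>T. x i then 1 else 0)"

lemma dep_on_ind: "dep_on T (ind T)"
  by (auto simp: dep_on_def ind_def)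

lemma avg_ind_single:
  assumes "i < n" "z \<in> inputs n"
  shows "avg n {} z (ind {i}) = 1/2"
proof -
  have a0: "avg n {i} (z(i:=False)) (ind {i}) = 0"
    by (subst avg_cong[where h = "\<lambda>_. 0"]) (auto simp: cset_def ind_def intro: avg_const inputs_upd assms)
  have a1: "avg n {i} (z(i:=True)) (ind {i}) = 1"
    by (subst avg_cong[where h = "\<lambda>_. 1"]) (auto simp: cset_def ind_def intro: avg_const inputs_upd assms)
  show ?thesis using avg_split[of i "{}" n z "ind {i}"] assms a0 a1 by simp
qed

lemma avg_ind:
  assumes "finite T" "T \<subseteq> {..<n}" "z \<in> inputs n"
  shows "avg n {} z (ind T) = (1/2) ^ card T"
  using assms
proof (induction T rule: finite_induct)
  case empty
  thus ?case by (simp add: ind_def avg_const)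
next
  case (insert a F)
  have "ind (insert a F) = (\<lambda>y. ind {a} y * ind F y)" by (auto simp: ind_def fun_eq_iff)
  hence "avg n {} z (ind (insert a F)) = avg n {} z (ind {a}) * avg n {} z (ind F)"
    using indep[OF insert(5) dep_on_ind dep_on_ind, of "{a}" F] insert(2) by simp
  thus ?case using insert avg_ind_single[of a n z] by simp
qed




fun lcost :: "nat set list \<Rightarrow> real" where
  "lcost [] = 0"
| "lcost (T#l) = 1 + (1 - (1/2) ^ card T) * lcost l"

fun cnt :: "nat set list \<Rightarrow> (nat \<Rightarrow> bool) \<Rightarrow> nat" where
  "cnt [] x = 0"
| "cnt (T#l) x = Suc (if \<forall>i\<in>T. x i then 0 else cnt l x)"

lemma lcost_nonneg: "lcost l \<ge> 0"
proof (induction l)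
  case (Cons T l)
  have "(1/2::real) ^ card T \<le> 1" by (simp add: power_le_one)
  thus ?case using Cons by simp
qed simp

lemma lcost_ge1: "l \<noteq> [] \<Longrightarrow> lcost l \<ge> 1"
proof (cases l)
  case (Cons T l')
  have "(1/2::real) ^ card T \<le> 1" by (simp add: power_le_one)
  thus ?thesis using Cons lcost_nonneg[of l'] by simp
qed simp

lemma cnt_le_length: "cnt l x \<le> length l"
  by (induction l) auto

lemma dep_on_cnt: "dep_on (\<Union>(set l)) (\<lambda>x. real (cnt l x))"
proof (induction l)
  case Nil thus ?case by (simp add: dep_on_def)
next
  case (Cons T l)
  show ?case unfolding dep_on_def
  proof (intro allI impI)
    fix x y :: "nat \<Rightarrow> bool" assume a: "\<forall>i\<in>\<Union>(set (T#l)). x i = y i"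
    hence "\<forall>i\<in>\<Union>(set l). x i = y i" by auto
    hence "real (cnt l x) = real (cnt l y)" using Cons unfolding dep_on_def by blast
    moreover have "(\<forall>i\<in>T. x i) = (\<forall>i\<in>T. y i)" using a by auto
    ultimately show "real (cnt (T#l) x) = real (cnt (T#l) y)" by simp
  qed
qed

lemma cnt_Cons_real: "real (cnt (T#l) x) = 1 + (1 - ind T x) * real (cnt l x)"
  by (simp add: ind_def)

lemma avg_diff: "avg n D z (\<lambda>y. g y - h y) = avg n D z g - avg n D z h"
  unfolding avg_def by (simp add: sum_subtractf diff_divide_distrib)

lemma avg_cnt:
  assumes "read_once_dnf n Ts" "distinct l" "set l \<subseteq> Ts" "z \<in> inputs n"
  shows "avg n {} z (\<lambda>x. real (cnt l x)) = lcost l"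
  using assms(2,3)
proof (induction l)
  case Nil thus ?case using avg_const[OF assms(4)] by simp
next
  case (Cons T l)
  have T: "T \<in> Ts" "finite T" "T \<subseteq> {..<n}" using Cons assms(1)
    by (auto simp: read_once_dnf_def intro: finite_subset)
  have disj: "T \<inter> \<Union>(set l) = {}"
  proof -
    { fix T' assume "T' \<in> set l"
      hence "T' \<in> Ts" "T' \<noteq> T" using Cons by auto
      hence "T \<inter> T' = {}" using T(1) assms(1) unfolding read_once_dnf_def by blast }
    thus ?thesis by blast
  qed
  have IH: "avg n {} z (\<lambda>x. real (cnt l x)) = lcost l" using Cons by simp
  have "avg n {} z (\<lambda>x. real (cnt (T#l) x))
      = avg n {} z (\<lambda>x. 1 + (real (cnt l x) - ind T x * real (cnt l x)))"
    by (rule avg_cong) (simp add: ind_def)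
  also have "\<dots> = 1 + avg n {} z (\<lambda>x. real (cnt l x)) - avg n {} z (\<lambda>x. ind T x * real (cnt l x))"
    by (simp only: avg_add avg_diff avg_const[OF assms(4)])
  also have "avg n {} z (\<lambda>x. ind T x * real (cnt l x)) = (1/2)^card T * lcost l"
    using indep[OF assms(4) dep_on_ind dep_on_cnt disj] avg_ind[OF T(2,3) assms(4)] IH by simp
  finally show ?case using IH by (simp add: algebra_simps)
qed

definition perms :: "nat set set \<Rightarrow> nat set list set" where
  "perms U = {l. set l = U \<and> distinct l}"

definition S :: "nat set set \<Rightarrow> real" where
  "S U = Min (lcost ` perms U)"

lemma finite_perms: "finite U \<Longrightarrow> finite (perms U)"
proof -
  assume f: "finite U"
  have "perms U \<subseteq> {l. set l \<subseteq> U \<and> length l \<le> card U}"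
  proof
    fix l assume "l \<in> perms U"
    hence "set l = U" "distinct l" by (auto simp: perms_def)
    thus "l \<in> {l. set l \<subseteq> U \<and> length l \<le> card U}" using distinct_card[of l] by simp
  qed
  thus ?thesis using finite_lists_length_le[OF f] finite_subset by blast
qed

lemma perms_ne: "finite U \<Longrightarrow> perms U \<noteq> {}"
  using finite_distinct_list by (auto simp: perms_def)

lemma S_attained: "finite U \<Longrightarrow> \<exists>l\<in>perms U. lcost l = S U"
proof -
  assume f: "finite U"
  have "Min (lcost ` perms U) \<in> lcost ` perms U"
    using f finite_perms perms_ne by (intro Min_in) auto
  thus ?thesis unfolding S_def by auto
qed

lemma S_le_lcost: "finite U \<Longrightarrow> l \<in> perms U \<Longrightarrow> S U \<le> lcost l"
  unfolding S_def by (rule Min_le[OF finite_imageI[OF finite_perms] imageI])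

lemma S_nonneg: "finite U \<Longrightarrow> S U \<ge> 0"
proof -
  assume "finite U"
  then obtain l where "lcost l = S U" using S_attained by blast
  thus ?thesis using lcost_nonneg[of l] by simp
qed

lemma S_empty: "S {} = 0"
proof -
  obtain l where "l \<in> perms {}" "lcost l = S {}" using S_attained[of "{}"] by blast
  thus ?thesis by (simp add: perms_def)
qed

lemma S_step:
  assumes "finite U" "T \<in> U"
  shows "S U \<le> 1 + (1 - (1/2)^card T) * S (U - {T})"
proof -
  obtain l where l: "l \<in> perms (U - {T})" "lcost l = S (U - {T})"
    using S_attained[of "U - {T}"] assms by auto
  have "T # l \<in> perms U" using l(1) assms(2) by (auto simp: perms_def)
  hence "S U \<le> lcost (T#l)" by (rule S_le_lcost[OF assms(1)])
  thus ?thesis using l by simp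
qed

lemma S_ge1: "finite U \<Longrightarrow> U \<noteq> {} \<Longrightarrow> S U \<ge> 1"
proof -
  assume a: "finite U" "U \<noteq> {}"
  then obtain l where "l \<in> perms U" "lcost l = S U" using S_attained by blast
  moreover have "l \<noteq> []" using a calculation by (auto simp: perms_def)
  ultimately show ?thesis using lcost_ge1 by metis
qed




locale rodnf =
  fixes n :: nat and Ts :: "nat set set"
  assumes ro: "read_once_dnf n Ts"
begin

lemma finTs: "finite Ts" using ro by (simp add: read_once_dnf_def)
lemma T_ne: "T \<in> Ts \<Longrightarrow> T \<noteq> {}" using ro by (simp add: read_once_dnf_def)
lemma T_sub: "T \<in> Ts \<Longrightarrow> T \<subseteq> {..<n}" using ro by (simp add: read_once_dnf_def)
lemma T_fin: "T \<in> Ts \<Longrightarrow> finite T" using T_sub finite_subset by blast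
lemma T_disj: "T \<in> Ts \<Longrightarrow> T' \<in> Ts \<Longrightarrow> T \<noteq> T' \<Longrightarrow> T \<inter> T' = {}"
  using ro by (simp add: read_once_dnf_def)

definition gfac :: "nat set \<Rightarrow> nat set \<Rightarrow> (nat \<Rightarrow> bool) \<Rightarrow> real" where
  "gfac T D z = (if T \<inter> D \<noteq> {} \<and> (\<forall>i\<in>T\<inter>D. z i) then 1 - (1/2) ^ card (T - D) else 1)"

definition G :: "nat set \<Rightarrow> (nat \<Rightarrow> bool) \<Rightarrow> real" where
  "G D z = (\<Prod>T\<in>Ts. gfac T D z)"

definition UU :: "nat set \<Rightarrow> nat set set" where
  "UU D = {T\<in>Ts. T \<inter> D = {}}"

definition Phi :: "nat set \<Rightarrow> (nat \<Rightarrow> bool) \<Rightarrow> real" where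
  "Phi D z = G D z * S (UU D)"

lemma gfac_bounds: "0 \<le> gfac T D z" "gfac T D z \<le> 1"
  unfolding gfac_def by (auto simp: power_le_one)

lemma G_bounds: "0 \<le> G D z" "G D z \<le> 1"
  unfolding G_def using gfac_bounds by (auto intro: prod_nonneg prod_le_1)

lemma finUU: "finite (UU D)" using finTs by (simp add: UU_def)

lemma Phi_nonneg: "Phi D z \<ge> 0"
  unfolding Phi_def using G_bounds S_nonneg[OF finUU] by simp

lemma gfac_other: "i \<notin> T \<Longrightarrow> gfac T (insert i D) (z(i:=b)) = gfac T D z"
proof -
  assume i: "i \<notin> T"
  have "T \<inter> insert i D = T \<inter> D" "T - insert i D = T - D" using i by auto
  moreover have "(\<forall>j\<in>T\<inter>D. (z(i:=b)) j) = (\<forall>j\<in>T\<inter>D. z j)" using i by auto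
  ultimately show ?thesis unfolding gfac_def by simp
qed

lemma UU_insert: "UU (insert i D) = {T\<in>UU D. i \<notin> T}"
  unfolding UU_def by auto

lemma G_split: "T0 \<in> Ts \<Longrightarrow> G D z = gfac T0 D z * (\<Prod>T\<in>Ts - {T0}. gfac T D z)"
  unfolding G_def using finTs by (simp add: prod.remove)

lemma rest_eq:
  assumes "T0 \<in> Ts" "i \<in> T0"
  shows "(\<Prod>T\<in>Ts - {T0}. gfac T (insert i D) (z(i:=b))) = (\<Prod>T\<in>Ts - {T0}. gfac T D z)"
proof (rule prod.cong[OF refl])
  fix T assume "T \<in> Ts - {T0}"
  hence "i \<notin> T" using T_disj[of T0 T] assms by auto
  thus "gfac T (insert i D) (z(i:=b)) = gfac T D z" by (rule gfac_other)
qed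

lemma rest_bounds: "0 \<le> (\<Prod>T\<in>A. gfac T D z)" "(\<Prod>T\<in>A. gfac T D z) \<le> 1"
  using gfac_bounds by (auto intro: prod_nonneg prod_le_1)

lemma alg1: "(R::real) * ((1 - 1/2 * w) * S') = (R * S' + (1 - w) * R * S') / 2"
  by (simp add: algebra_simps)

lemma alg2: "(1 - 1/2 * w) * (R::real) * X = (R * X + (1 - w) * R * X) / 2"
  by (simp add: algebra_simps)

lemma Phi_step:
  assumes "i < n" "i \<notin> D"
  shows "Phi D z \<le> 1 + (Phi (insert i D) (z(i:=False)) + Phi (insert i D) (z(i:=True))) / 2"
proof (cases "\<exists>T0\<in>Ts. i \<in> T0")
  case False
  have "G (insert i D) (z(i:=b)) = G D z" for b
    unfolding G_def using False by (intro prod.cong[OF refl] gfac_other) auto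
  moreover have "UU (insert i D) = UU D" using False by (auto simp: UU_insert UU_def)
  ultimately show ?thesis using Phi_nonneg[of D z] by (simp add: Phi_def)
next
  case True
  then obtain T0 where T0: "T0 \<in> Ts" "i \<in> T0" by blast
  define R where "R = (\<Prod>T\<in>Ts - {T0}. gfac T D z)"
  have R: "0 \<le> R" "R \<le> 1" unfolding R_def using rest_bounds by auto
  have Gb: "G (insert i D) (z(i:=b)) = gfac T0 (insert i D) (z(i:=b)) * R" for b
    using G_split[OF T0(1), of "insert i D" "z(i:=b)"] rest_eq[OF T0] unfolding R_def by simp
  have G0: "G D z = gfac T0 D z * R" unfolding R_def by (rule G_split[OF T0(1)])
  have kill: "gfac T0 (insert i D) (z(i:=False)) = 1"
    unfolding gfac_def using T0(2) by auto
  have fin0: "finite T0" using T_fin T0 by auto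
  show ?thesis
  proof (cases "T0 \<inter> D = {}")
    case True
    have U: "UU (insert i D) = UU D - {T0}"
      unfolding UU_insert UU_def using T0 T_disj by blast
    have T0U: "T0 \<in> UU D" using True T0 by (simp add: UU_def)
    have g1: "gfac T0 (insert i D) (z(i:=True)) = 1 - (1/2) ^ (card T0 - 1)"
    proof -
      have "T0 \<inter> insert i D = {i}" using True T0(2) by auto
      moreover have "T0 - insert i D = T0 - {i}" using True by auto
      ultimately show ?thesis unfolding gfac_def using fin0 T0(2) True by simp
    qed
    have gD: "gfac T0 D z = 1" unfolding gfac_def using True by simp
    have "card T0 > 0" using T0(2) fin0 by (simp add: card_gt_0_iff) blast
    hence c: "card T0 \<ge> 1" by simp
    have pw: "(1/2::real) ^ card T0 = (1/2) * (1/2) ^ (card T0 - 1)"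
      using c by (cases "card T0") auto
    define S' where "S' = S (UU D - {T0})"
    have S'0: "S' \<ge> 0" unfolding S'_def by (rule S_nonneg) (use finUU in auto)
    have st: "S (UU D) \<le> 1 + (1 - (1/2)^card T0) * S'"
      unfolding S'_def by (rule S_step[OF finUU T0U])
    have "Phi D z = R * S (UU D)" unfolding Phi_def G0 gD by simp
    also have "\<dots> \<le> R * (1 + (1 - (1/2)^card T0) * S')" using st R by (intro mult_left_mono) auto
    also have "\<dots> \<le> 1 + R * ((1 - (1/2)^card T0) * S')" using R by (simp add: algebra_simps)
    also have "R * ((1 - (1/2)^card T0) * S') = (Phi (insert i D) (z(i:=False)) + Phi (insert i D) (z(i:=True))) / 2"
    proof -
      have p0: "Phi (insert i D) (z(i:=False)) = R * S'" unfolding Phi_def Gb kill U S'_def by simp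
      have p1: "Phi (insert i D) (z(i:=True)) = (1 - (1/2)^(card T0 - 1)) * R * S'" unfolding Phi_def Gb g1 U S'_def by simp
      show ?thesis unfolding p0 p1 pw by (rule alg1)
    qed
    finally show ?thesis by simp
  next
    case False
    note touched = False
    have U: "UU (insert i D) = UU D"
      unfolding UU_insert UU_def using T0 T_disj touched by blast
    show ?thesis
    proof (cases "\<forall>j\<in>T0\<inter>D. z j")
      case False
      then obtain j where j: "j \<in> T0 \<inter> D" "\<not> z j" by blast
      have "j \<noteq> i" using j assms(2) by auto
      hence "gfac T0 (insert i D) (z(i:=b)) = 1" for b unfolding gfac_def using j by auto
      moreover have "gfac T0 D z = 1" unfolding gfac_def using j by auto
      ultimately show ?thesis using Phi_nonneg[of D z] unfolding Phi_def G0 Gb U by simp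
    next
      case True
      define r where "r = card (T0 - D)"
      have iTD: "i \<in> T0 - D" using T0(2) assms(2) by simp
      have "card (T0 - D) > 0" using iTD fin0 by (simp add: card_gt_0_iff) blast
      hence r1: "r \<ge> 1" unfolding r_def by simp
      have cr: "card (T0 - insert i D) = r - 1"
      proof -
        have "T0 - insert i D = (T0 - D) - {i}" by auto
        thus ?thesis unfolding r_def using iTD fin0 by simp
      qed
      have gD: "gfac T0 D z = 1 - (1/2)^r" unfolding gfac_def r_def using touched True by simp
      have g1: "gfac T0 (insert i D) (z(i:=True)) = 1 - (1/2)^(r-1)"
        unfolding gfac_def cr using touched True by auto
      have pw: "(1/2::real) ^ r = (1/2) * (1/2) ^ (r - 1)"
        using r1 by (cases r) auto
      have p0: "Phi (insert i D) (z(i:=False)) = R * S (UU D)" unfolding Phi_def Gb kill U by simp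
      have p1: "Phi (insert i D) (z(i:=True)) = (1 - (1/2)^(r-1)) * R * S (UU D)" unfolding Phi_def Gb g1 U by simp
      have pD: "Phi D z = (1 - 1/2 * (1/2)^(r-1)) * R * S (UU D)" unfolding Phi_def G0 gD pw by simp
      have "Phi D z = (Phi (insert i D) (z(i:=False)) + Phi (insert i D) (z(i:=True))) / 2"
        unfolding p0 p1 pD by (rule alg2)
      thus ?thesis using Phi_nonneg[of D z] by linarith
    qed
  qed
qed

lemma Phi_leaf:
  assumes z: "z \<in> inputs n" and det: "\<forall>y\<in>cset n D z. determined n (dnf_eval Ts) D y"
  shows "Phi D z \<le> 0"
proof (cases "\<exists>T\<in>Ts. T \<subseteq> D \<and> (\<forall>i\<in>T. z i)")
  case True
  then obtain T where T: "T \<in> Ts" "T \<subseteq> D" "\<forall>i\<in>T. z i" by blast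
  have tne: "T \<noteq> {}" by (rule T_ne[OF T(1)])
  have c1: "T \<inter> D \<noteq> {}" using T(2) tne by auto
  have e: "T - D = {}" using T(2) by auto
  have c2: "\<forall>i\<in>T\<inter>D. z i" using T(3) by simp
  have "gfac T D z = 1 - (1/2) ^ card (T - D)" unfolding gfac_def using c1 c2 by simp
  also have "\<dots> = 0" unfolding e by simp
  finally have g0: "gfac T D z = 0" .
  have ex: "\<exists>T'\<in>Ts. gfac T' D z = 0" using g0 T(1) by blast
  have "G D z = 0" unfolding G_def by (rule prod_zero[OF finTs ex])
  thus ?thesis by (simp add: Phi_def)
next
  case False
  note nf = False
  show ?thesis
  proof (cases "UU D = {}")
    case True thus ?thesis by (simp add: Phi_def S_empty)
  next
    case False
    then obtain T1 where T1: "T1 \<in> Ts" "T1 \<inter> D = {}" by (auto simp: UU_def)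
    define y0 where "y0 = (\<lambda>i. i \<in> D \<and> z i)"
    define y1 where "y1 = (\<lambda>i. if i \<in> D then z i else i < n)"
    have y0: "y0 \<in> cset n D z" using z unfolding y0_def cset_def inputs_def by auto
    have y1: "y1 \<in> cset n D z" using z unfolding y1_def cset_def inputs_def by auto
    have sub: "T1 \<subseteq> {..<n}" by (rule T_sub[OF T1(1)])
    have "\<forall>i\<in>T1. y1 i"
    proof
      fix i assume "i \<in> T1"
      hence "i \<notin> D" "i < n" using T1(2) sub by auto
      thus "y1 i" unfolding y1_def by simp
    qed
    hence f1: "dnf_eval Ts y1" unfolding dnf_eval_def using T1(1) by blast
    have f0: "\<not> dnf_eval Ts y0"
    proof
      assume "dnf_eval Ts y0"
      then obtain T where T: "T \<in> Ts" "\<forall>i\<in>T. y0 i" unfolding dnf_eval_def by blast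
      hence "T \<subseteq> D" "\<forall>i\<in>T. z i" unfolding y0_def by auto
      thus False using nf T(1) by blast
    qed
    have d0: "determined n (dnf_eval Ts) D y0" using det y0 by blast
    have "y1 \<in> inputs n" using y1 by (simp add: cset_def)
    moreover have "\<forall>i\<in>D. y1 i = y0 i" unfolding y0_def y1_def by simp
    ultimately have "dnf_eval Ts y1 = dnf_eval Ts y0" using d0 unfolding determined_def by blast
    thus ?thesis using f0 f1 by simp
  qed
qed

lemma lower_Phi:
  assumes "dvars t \<subseteq> {..<n}" "z \<in> inputs n"
    "\<forall>y\<in>cset n D z. determined n (dnf_eval Ts) (D \<union> dtested t y) y"
  shows "Phi D z \<le> avg n D z (dcost (\<lambda>_. 1) t)"
  using assms
proof (induction t arbitrary: D z)
  case Leaf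
  have "Phi D z \<le> 0" using Phi_leaf[OF Leaf(2)] Leaf(3) by simp
  thus ?case using avg_const[OF Leaf(2), of D 0] by simp
next
  case (Node i l r)
  have i: "i < n" using Node(3) by simp
  have dl: "dvars l \<subseteq> {..<n}" and dr: "dvars r \<subseteq> {..<n}" using Node(3) by auto
  show ?case
  proof (cases "i \<in> D")
    case True
    define c where "c = (if z i then r else l)"
    have eq: "\<And>y. y \<in> cset n D z \<Longrightarrow> dcost (\<lambda>_. 1) (Node i l r) y = 1 + dcost (\<lambda>_. 1) c y"
    proof -
      fix y assume "y \<in> cset n D z"
      hence yz: "z i = y i" using True by (auto simp: cset_def)
      show "dcost (\<lambda>_. 1) (Node i l r) y = 1 + dcost (\<lambda>_. 1) c y" unfolding c_def yz by (simp only: dcost.simps)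
    qed
    have "Phi D z \<le> avg n D z (dcost (\<lambda>_. 1) c)"
    proof (cases "z i")
      case True
      show ?thesis unfolding c_def using True
      proof (simp, intro Node(2)[OF dr Node(4)] ballI)
        fix y assume y: "y \<in> cset n D z"
        hence "y i = z i" using \<open>i \<in> D\<close> by (auto simp: cset_def)
        hence "D \<union> dtested r y = D \<union> dtested (Node i l r) y" using \<open>i \<in> D\<close> True by auto
        thus "determined n (dnf_eval Ts) (D \<union> dtested r y) y" using Node(5) y by simp
      qed
    next
      case False
      show ?thesis unfolding c_def using False
      proof (simp, intro Node(1)[OF dl Node(4)] ballI)
        fix y assume y: "y \<in> cset n D z"
        hence "y i = z i" using \<open>i \<in> D\<close> by (auto simp: cset_def)
        hence "D \<union> dtested l y = D \<union> dtested (Node i l r) y" using \<open>i \<in> D\<close> False by auto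
        thus "determined n (dnf_eval Ts) (D \<union> dtested l y) y" using Node(5) y by simp
      qed
    qed
    also have "\<dots> \<le> 1 + avg n D z (dcost (\<lambda>_. 1) c)" by simp
    also have "\<dots> = avg n D z (\<lambda>y. 1 + dcost (\<lambda>_. 1) c y)"
      by (simp only: avg_add avg_const[OF Node(4)])
    also have "\<dots> = avg n D z (dcost (\<lambda>_. 1) (Node i l r))"
      by (rule avg_cong) (simp only: eq)
    finally show ?thesis .
  next
    case False
    have z0: "z(i:=False) \<in> inputs n" and z1: "z(i:=True) \<in> inputs n" using inputs_upd[OF Node(4) i] by auto
    have sub0: "\<And>y. y \<in> cset n (insert i D) (z(i:=False)) \<Longrightarrow> y \<in> cset n D z \<and> \<not> y i"
      using False by (auto simp: cset_def)
    have sub1: "\<And>y. y \<in> cset n (insert i D) (z(i:=True)) \<Longrightarrow> y \<in> cset n D z \<and> y i"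
      using False by (auto simp: cset_def)
    have IH0: "Phi (insert i D) (z(i:=False)) \<le> avg n (insert i D) (z(i:=False)) (dcost (\<lambda>_. 1) l)"
    proof (intro Node(1)[OF dl z0] ballI)
      fix y assume y: "y \<in> cset n (insert i D) (z(i:=False))"
      hence "D \<union> dtested (Node i l r) y = insert i D \<union> dtested l y" using sub0 by auto
      thus "determined n (dnf_eval Ts) (insert i D \<union> dtested l y) y" using Node(5) sub0[OF y] by metis
    qed
    have IH1: "Phi (insert i D) (z(i:=True)) \<le> avg n (insert i D) (z(i:=True)) (dcost (\<lambda>_. 1) r)"
    proof (intro Node(2)[OF dr z1] ballI)
      fix y assume y: "y \<in> cset n (insert i D) (z(i:=True))"
      hence "D \<union> dtested (Node i l r) y = insert i D \<union> dtested r y" using sub1 by auto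
      thus "determined n (dnf_eval Ts) (insert i D \<union> dtested r y) y" using Node(5) sub1[OF y] by metis
    qed
    have a0: "avg n (insert i D) (z(i:=False)) (dcost (\<lambda>_. 1) (Node i l r)) = 1 + avg n (insert i D) (z(i:=False)) (dcost (\<lambda>_. 1) l)"
    proof -
      have "avg n (insert i D) (z(i:=False)) (dcost (\<lambda>_. 1) (Node i l r)) = avg n (insert i D) (z(i:=False)) (\<lambda>y. 1 + dcost (\<lambda>_. 1) l y)"
        by (rule avg_cong) (use sub0 in auto)
      thus ?thesis by (simp add: avg_add avg_const[OF z0])
    qed
    have a1: "avg n (insert i D) (z(i:=True)) (dcost (\<lambda>_. 1) (Node i l r)) = 1 + avg n (insert i D) (z(i:=True)) (dcost (\<lambda>_. 1) r)"
    proof -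
      have "avg n (insert i D) (z(i:=True)) (dcost (\<lambda>_. 1) (Node i l r)) = avg n (insert i D) (z(i:=True)) (\<lambda>y. 1 + dcost (\<lambda>_. 1) r y)"
        by (rule avg_cong) (use sub1 in auto)
      thus ?thesis by (simp add: avg_add avg_const[OF z1])
    qed
    have "Phi D z \<le> 1 + (Phi (insert i D) (z(i:=False)) + Phi (insert i D) (z(i:=True))) / 2"
      by (rule Phi_step[OF i False])
    also have "\<dots> \<le> 1 + (avg n (insert i D) (z(i:=False)) (dcost (\<lambda>_. 1) l) + avg n (insert i D) (z(i:=True)) (dcost (\<lambda>_. 1) r)) / 2"
      using IH0 IH1 by simp
    also have "\<dots> = avg n D z (dcost (\<lambda>_. 1) (Node i l r))"
      unfolding avg_split[OF False i Node(4)] a0 a1 by simp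
    finally show ?thesis .
  qed
qed

end



definition EE :: "nat \<Rightarrow> ((nat \<Rightarrow> bool) \<Rightarrow> real) \<Rightarrow> real" where
  "EE n g = avg n {} (\<lambda>_. False) g"

lemma z0_in: "(\<lambda>_. False) \<in> inputs n" by (simp add: inputs_def)

lemma cset_empty: "cset n {} z = inputs n" by (simp add: cset_def)

lemma expect_EE: "expect n (\<lambda>_. 1/2) g = EE n g"
proof -
  have p: "prob n (\<lambda>_. 1/2) x = (1/2)^n" for x
  proof -
    have "prob n (\<lambda>_. 1/2) x = (\<Prod>i<n. (1/2::real))" unfolding prob_def by (rule prod.cong[OF refl]) simp
    thus ?thesis by simp
  qed
  have "(\<Sum>x\<in>inputs n. (1/2::real)^n * g x) = (1/2)^n * (\<Sum>x\<in>inputs n. g x)"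
    by (rule sum_distrib_left[symmetric])
  also have "\<dots> = (\<Sum>x\<in>inputs n. g x) / real (2^n)"
    by (simp add: power_one_over)
  finally show ?thesis unfolding expect_def EE_def avg_def cset_empty card_inputs p .
qed

lemma dcost_ge_card: "real (card (dtested t x)) \<le> dcost (\<lambda>_. 1) t x"
proof (induction t)
  case (Node i l r)
  have "finite (dtested c x)" for c by (induction c) auto
  hence "card (dtested (Node i l r) x) \<le> Suc (card (dtested (if x i then r else l) x))"
    by (simp add: card_insert_if)
  thus ?case using Node by (cases "x i") auto
qed simp

fun ftree :: "nat list \<Rightarrow> dtree" where
  "ftree [] = Leaf"
| "ftree (i#is) = Node i (ftree is) (ftree is)"

lemma ftree_tested: "dtested (ftree l) x = set l" by (induction l) auto
lemma ftree_vars: "dvars (ftree l) = set l" by (induction l) auto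

lemma determined_all:
  assumes "{..<n} \<subseteq> A" "x \<in> inputs n"
  shows "determined n f A x"
proof -
  have "y = x" if "y \<in> inputs n" "\<forall>i\<in>A. y i = x i" for y
  proof
    fix i show "y i = x i"
      using that assms by (cases "i < n") (auto simp: inputs_def)
  qed
  thus ?thesis unfolding determined_def by auto
qed

lemma valid_exists: "valid_tree n f (ftree [0..<n])"
  unfolding valid_tree_def ftree_tested ftree_vars
  by (auto intro: determined_all)

lemma OPT_ge:
  assumes "\<And>t. valid_tree n f t \<Longrightarrow> B \<le> EE n (dcost (\<lambda>_. 1) t)"
  shows "B \<le> OPT_A n f (\<lambda>_. 1) (\<lambda>_. 1/2)"
  unfolding OPT_A_def expect_EE
  by (rule cInf_greatest) (use valid_exists assms in auto)

context rodnf
begin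

lemma lower_S:
  assumes "valid_tree n (dnf_eval Ts) t"
  shows "S Ts \<le> EE n (dcost (\<lambda>_. 1) t)"
proof -
  have "Phi {} (\<lambda>_. False) \<le> avg n {} (\<lambda>_. False) (dcost (\<lambda>_. 1) t)"
    using assms z0_in unfolding valid_tree_def cset_empty by (intro lower_Phi) (auto simp: cset_empty)
  moreover have "Phi {} (\<lambda>_. False) = S Ts"
    unfolding Phi_def G_def gfac_def UU_def by simp
  ultimately show ?thesis by (simp add: EE_def)
qed

lemma zero_in_term:
  assumes "determined n (dnf_eval Ts) A x" "x \<in> inputs n" "\<not> dnf_eval Ts x" "T \<in> Ts"
  shows "\<exists>i\<in>T\<inter>A. \<not> x i"
proof (rule ccontr)
  assume "\<not> ?thesis"
  hence allx: "\<forall>i\<in>T\<inter>A. x i" by auto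
  define y where "y = (\<lambda>i. if i \<in> A then x i else i \<in> T)"
  have "y \<in> inputs n" using assms(2) T_sub[OF assms(4)] unfolding y_def inputs_def by auto
  moreover have "\<forall>i\<in>A. y i = x i" unfolding y_def by auto
  moreover have "dnf_eval Ts y" unfolding dnf_eval_def using allx assms(4) unfolding y_def by auto
  ultimately have "dnf_eval Ts y = dnf_eval Ts x" using assms(1) unfolding determined_def by blast
  thus False using \<open>dnf_eval Ts y\<close> assms(3) by simp
qed

lemma card_le_tested:
  assumes "finite A" "determined n (dnf_eval Ts) A x" "x \<in> inputs n" "\<not> dnf_eval Ts x"
  shows "card Ts \<le> card A"
proof -
  define h where "h T = (SOME i. i \<in> T \<inter> A \<and> \<not> x i)" for T
  have h: "h T \<in> T \<inter> A \<and> \<not> x (h T)" if "T \<in> Ts" for T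
  proof -
    have ex: "\<exists>i. i \<in> T \<inter> A \<and> \<not> x i" using zero_in_term[OF assms(2-4) that] by blast
    show ?thesis unfolding h_def by (rule someI_ex[OF ex])
  qed
  have "inj_on h Ts"
  proof (rule inj_onI)
    fix T T' assume "T \<in> Ts" "T' \<in> Ts" "h T = h T'"
    show "T = T'"
    proof (rule ccontr)
      assume "T \<noteq> T'"
      hence "T \<inter> T' = {}" using T_disj \<open>T \<in> Ts\<close> \<open>T' \<in> Ts\<close> by simp
      moreover have "h T \<in> T" "h T' \<in> T'" using h \<open>T \<in> Ts\<close> \<open>T' \<in> Ts\<close> by auto
      ultimately show False using \<open>h T = h T'\<close> by auto
    qed
  qed
  moreover have "h ` Ts \<subseteq> A" using h by auto
  ultimately show ?thesis by (rule card_inj_on_le[OF _ _ assms(1)])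
qed

lemma lower_cert:
  assumes "valid_tree n (dnf_eval Ts) t"
  shows "real (card Ts) * EE n (\<lambda>x. if dnf_eval Ts x then 0 else 1) \<le> EE n (dcost (\<lambda>_. 1) t)"
proof -
  have fin: "finite (dtested t x)" for x by (induction t) auto
  have "real (card Ts) * (if dnf_eval Ts x then 0 else 1) \<le> dcost (\<lambda>_. 1) t x" if "x \<in> inputs n" for x
  proof (cases "dnf_eval Ts x")
    case True
    have "0 \<le> dcost (\<lambda>_. 1) t x" by (induction t) auto
    thus ?thesis using True by simp
  next
    case False
    have "determined n (dnf_eval Ts) (dtested t x) x" using assms that unfolding valid_tree_def by blast
    hence "card Ts \<le> card (dtested t x)" by (rule card_le_tested[OF fin _ that False])
    thus ?thesis using False dcost_ge_card[of t x] by simp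
  qed
  thus ?thesis unfolding EE_def avg_cmult[symmetric] by (intro avg_mono) (auto simp: cset_empty)
qed

lemma OPT_lower:
  "S Ts \<le> OPT_A n (dnf_eval Ts) (\<lambda>_. 1) (\<lambda>_. 1/2)"
  "real (card Ts) * EE n (\<lambda>x. if dnf_eval Ts x then 0 else 1) \<le> OPT_A n (dnf_eval Ts) (\<lambda>_. 1) (\<lambda>_. 1/2)"
  by (rule OPT_ge, erule lower_S)+ (rule OPT_ge, erule lower_cert)

end



lemma sum_list_ones: "sum_list (map (\<lambda>_. 1::real) xs) = real (length xs)"
  by (induction xs) auto

lemma nacost_le:
  assumes "determined n f (set (take k \<sigma>)) x"
  shows "nacost n f (\<lambda>_. 1) \<sigma> x \<le> real k"
proof -
  define k' where "k' = (LEAST k. determined n f (set (take k \<sigma>)) x)"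
  have "k' \<le> k" unfolding k'_def by (rule Least_le) (rule assms)
  hence "length (take k' \<sigma>) \<le> k" by simp
  thus ?thesis unfolding nacost_def k'_def[symmetric] Let_def sum_list_ones by simp
qed

lemma set_take_mono: "k \<le> k' \<Longrightarrow> set (take k xs) \<subseteq> set (take k' xs)"
  by (rule set_take_subset_set_take)

lemma set_take_append: "set (take k xs) \<subseteq> set (take k (xs @ ys))"
  by (simp add: take_append)

lemma determined_mono: "determined n f A x \<Longrightarrow> A \<subseteq> B \<Longrightarrow> determined n f B x"
  unfolding determined_def by blast

context rodnf
begin

definition blk :: "nat \<Rightarrow> nat set \<Rightarrow> nat list" where
  "blk K T = take K (sorted_list_of_set T)"

lemma blk_distinct: "distinct (blk K T)"
  unfolding blk_def by (rule distinct_take) simp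

lemma blk_sub: "T \<in> Ts \<Longrightarrow> set (blk K T) \<subseteq> T"
proof -
  assume "T \<in> Ts"
  hence "set (sorted_list_of_set T) = T" using T_fin by simp
  thus ?thesis unfolding blk_def using set_take_subset by metis
qed

lemma blk_small: "T \<in> Ts \<Longrightarrow> card T \<le> K \<Longrightarrow> set (blk K T) = T"
proof -
  assume a: "T \<in> Ts" "card T \<le> K"
  have "length (sorted_list_of_set T) \<le> K" using a(2) by simp
  hence "blk K T = sorted_list_of_set T" unfolding blk_def by simp
  thus ?thesis using T_fin[OF a(1)] by simp
qed

lemma blk_length: "length (blk K T) \<le> K"
  unfolding blk_def by simp

lemma blk_card: "T \<in> Ts \<Longrightarrow> K < card T \<Longrightarrow> card (set (blk K T)) = K"
proof -
  assume a: "T \<in> Ts" "K < card T"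
  have "card (set (blk K T)) = length (blk K T)" using blk_distinct distinct_card by blast
  also have "\<dots> = K" unfolding blk_def using a(2) by simp
  finally show ?thesis .
qed

lemma concat_blk_distinct:
  assumes "distinct lst" "set lst \<subseteq> Ts"
  shows "distinct (concat (map (blk K) lst))"
  using assms
proof (induction lst)
  case (Cons T lst)
  have IH: "distinct (concat (map (blk K) lst))" using Cons by simp
  have "set (blk K T) \<inter> set (concat (map (blk K) lst)) = {}"
  proof -
    { fix i T' assume i: "i \<in> set (blk K T)" "T' \<in> set lst" "i \<in> set (blk K T')"
      have "T' \<in> Ts" "T' \<noteq> T" using Cons(2,3) i(2) by auto
      hence "T \<inter> T' = {}" using T_disj Cons(3) by simp
      moreover have "i \<in> T" using blk_sub Cons(3) i(1) by auto
      moreover have "i \<in> T'" using blk_sub \<open>T' \<in> Ts\<close> i(3) by auto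
      ultimately have False by blast }
    thus ?thesis by auto
  qed
  thus ?case using IH blk_distinct by simp
qed simp

lemma concat_blk_sub:
  assumes "set lst \<subseteq> Ts"
  shows "set (concat (map (blk K) lst)) \<subseteq> {..<n}"
proof -
  { fix i T assume "T \<in> set lst" "i \<in> set (blk K T)"
    hence "i \<in> T" "T \<in> Ts" using blk_sub assms by auto
    hence "i < n" using T_sub by auto }
  thus ?thesis by auto
qed

lemma concat_blk_length:
  "length (concat (map (blk K) lst)) \<le> K * length lst"
proof (induction lst)
  case (Cons T lst)
  thus ?case using blk_length[of K T] by simp
qed simp

definition sig :: "nat \<Rightarrow> nat set list \<Rightarrow> nat list" where
  "sig K lst = concat (map (blk K) lst) @ filter (\<lambda>i. i \<notin> set (concat (map (blk K) lst))) [0..<n]"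

lemma sig_perm:
  assumes "distinct lst" "set lst \<subseteq> Ts"
  shows "is_perm n (sig K lst)"
proof -
  let ?L = "concat (map (blk K) lst)"
  have d: "distinct ?L" by (rule concat_blk_distinct[OF assms])
  have s: "set ?L \<subseteq> {..<n}" by (rule concat_blk_sub[OF assms(2)])
  have "distinct (sig K lst)" unfolding sig_def using d by auto
  moreover have "set (sig K lst) = {..<n}" unfolding sig_def using s by auto
  ultimately show ?thesis by (simp add: is_perm_def)
qed

lemma sig_take_all:
  assumes "x \<in> inputs n" "distinct lst" "set lst \<subseteq> Ts"
  shows "determined n f (set (take n (sig K lst))) x"
proof -
  have "length (sig K lst) = n"
    using sig_perm[OF assms(2,3)] unfolding is_perm_def by (metis card_lessThan distinct_card)
  hence "set (take n (sig K lst)) = {..<n}" using sig_perm[OF assms(2,3)] unfolding is_perm_def by simp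
  thus ?thesis by (intro determined_all) (auto simp: assms(1))
qed

definition full :: "nat set \<Rightarrow> (nat \<Rightarrow> bool) \<Rightarrow> bool" where
  "full T x = (\<forall>i\<in>T. x i)"

lemma first_small:
  assumes "set lst \<subseteq> Ts" "\<forall>T\<in>set lst. card T \<le> K" "\<exists>T\<in>set lst. full T x"
  shows "\<exists>k \<le> K * cnt lst x. \<exists>T\<in>set lst. full T x \<and> T \<subseteq> set (take k (concat (map (blk K) lst)))"
  using assms
proof (induction lst)
  case Nil thus ?case by simp
next
  case (Cons T lst)
  have TT: "T \<in> Ts" "card T \<le> K" using Cons by auto
  have sb: "set (blk K T) = T" by (rule blk_small[OF TT])
  show ?case
  proof (cases "full T x")
    case True
    have "T \<subseteq> set (take (length (blk K T)) (concat (map (blk K) (T#lst))))"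
      using sb by simp
    moreover have "length (blk K T) \<le> K * cnt (T#lst) x" using blk_length[of K T] by simp
    moreover have "T \<in> set (T#lst)" by simp
    ultimately show ?thesis using True by blast
  next
    case False
    have "\<exists>T\<in>set lst. full T x" using Cons(4) False by auto
    then obtain k T' where k: "k \<le> K * cnt lst x" "T' \<in> set lst" "full T' x"
      "T' \<subseteq> set (take k (concat (map (blk K) lst)))"
      using Cons by auto
    have "set (take k (concat (map (blk K) lst))) \<subseteq> set (take (length (blk K T) + k) (concat (map (blk K) (T#lst))))"
      by (simp add: take_append)
    moreover have "length (blk K T) + k \<le> K * cnt (T#lst) x"
    proof -
      have nf: "\<not> (\<forall>i\<in>T. x i)" using False by (simp add: full_def)
      have "cnt (T#lst) x = Suc (cnt lst x)" by (simp only: cnt.simps if_not_P[OF nf])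
      thus ?thesis using k(1) blk_length[of K T] by simp
    qed
    ultimately show ?thesis using k by (meson order_trans list.set_intros(2))
  qed
qed

lemma cnt_filter:
  assumes "\<forall>T\<in>set lst. \<not> P T \<longrightarrow> \<not> full T x"
  shows "cnt (filter P lst) x \<le> cnt lst x"
  using assms
proof (induction lst)
  case (Cons T lst)
  thus ?case by (cases "P T") (auto simp: full_def)
qed simp

end



context rodnf
begin

lemma det_true:
  assumes "T \<in> Ts" "T \<subseteq> A" "full T x"
  shows "determined n (dnf_eval Ts) A x"
proof -
  have "dnf_eval Ts y" if "\<forall>i\<in>A. y i = x i" for y
  proof -
    have "\<forall>i\<in>T. y i" using that assms(2,3) unfolding full_def by auto
    thus ?thesis unfolding dnf_eval_def using assms(1) by blast
  qed
  moreover have "dnf_eval Ts x" using assms(1,3) unfolding dnf_eval_def full_def by blast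
  ultimately show ?thesis unfolding determined_def by simp
qed

lemma det_false:
  assumes "\<forall>T\<in>Ts. \<exists>i\<in>T\<inter>A. \<not> x i"
  shows "determined n (dnf_eval Ts) A x"
proof -
  have nd: "\<not> dnf_eval Ts y" if "\<forall>i\<in>A. y i = x i" for y
  proof
    assume "dnf_eval Ts y"
    then obtain T where T: "T \<in> Ts" "\<forall>i\<in>T. y i" unfolding dnf_eval_def by blast
    obtain i where "i \<in> T \<inter> A" "\<not> x i" using assms T(1) by blast
    thus False using that T(2) by auto
  qed
  have "\<not> dnf_eval Ts x" using nd[of x] by simp
  thus ?thesis unfolding determined_def using nd by simp
qed

lemma card_Ts_le: "card Ts \<le> n"
proof -
  have "inj_on Min Ts"
  proof (rule inj_onI)
    fix T T' assume a: "T \<in> Ts" "T' \<in> Ts" "Min T = Min T'"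
    have "Min T \<in> T" using T_fin[OF a(1)] T_ne[OF a(1)] by simp
    moreover have "Min T' \<in> T'" using T_fin[OF a(2)] T_ne[OF a(2)] by simp
    ultimately show "T = T'"
    proof -
      assume m1: "Min T \<in> T" and m2: "Min T' \<in> T'"
      show "T = T'"
      proof (rule ccontr)
        assume "T \<noteq> T'"
        hence "T \<inter> T' = {}" using T_disj a(1,2) by simp
        thus False using m1 m2 a(3) by auto
      qed
    qed
  qed
  moreover have "Min ` Ts \<subseteq> {..<n}"
  proof
    fix i assume "i \<in> Min ` Ts"
    then obtain T where "T \<in> Ts" "i = Min T" by blast
    moreover have "Min T \<in> T" using T_fin[OF \<open>T \<in> Ts\<close>] T_ne[OF \<open>T \<in> Ts\<close>] by simp
    ultimately show "i \<in> {..<n}" using T_sub by blast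
  qed
  ultimately show ?thesis using card_inj_on_le[of Min Ts "{..<n}"] by simp
qed

definition Evt :: "nat \<Rightarrow> (nat \<Rightarrow> bool) \<Rightarrow> bool" where
  "Evt K x = (\<exists>T\<in>Ts. K < card T \<and> full (set (blk K T)) x)"

definition indE :: "nat \<Rightarrow> (nat \<Rightarrow> bool) \<Rightarrow> real" where
  "indE K x = (if Evt K x then 1 else 0)"

definition notf :: "(nat \<Rightarrow> bool) \<Rightarrow> real" where
  "notf x = (if dnf_eval Ts x then 0 else 1)"

definition lsm :: "nat \<Rightarrow> nat set list \<Rightarrow> nat set list" where
  "lsm K lst = filter (\<lambda>T. card T \<le> K) lst @ filter (\<lambda>T. \<not> card T \<le> K) lst"

lemma lsm_props:
  assumes "lst \<in> perms Ts"
  shows "distinct (lsm K lst)" "set (lsm K lst) = Ts"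
  using assms unfolding lsm_def perms_def by auto

lemma full_large_Evt:
  assumes "T \<in> Ts" "K < card T" "full T x"
  shows "Evt K x"
  using assms blk_sub[OF assms(1), of K] unfolding Evt_def full_def by blast

lemma perx:
  assumes lst: "lst \<in> perms Ts" and x: "x \<in> inputs n"
  shows "nacost n (dnf_eval Ts) (\<lambda>_. 1) (sig K (lsm K lst)) x
    \<le> real K * real (cnt lst x) + real K * real (card Ts) * indE K x
       + real K * real (card Ts) * notf x + real n * indE K x"
proof -
  let ?f = "dnf_eval Ts" and ?\<sigma> = "sig K (lsm K lst)" and ?m = "real (card Ts)"
  let ?ls = "filter (\<lambda>T. card T \<le> K) lst"
  let ?L = "concat (map (blk K) (lsm K lst))"
  have dl: "distinct (lsm K lst)" and sl: "set (lsm K lst) = Ts" using lsm_props[OF lst] by auto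
  have lenlst: "length lst = card Ts"
  proof -
    have "set lst = Ts" "distinct lst" using lst unfolding perms_def by auto
    thus ?thesis using distinct_card[of lst] by simp
  qed
  have sls: "set ?ls \<subseteq> Ts" using lst unfolding perms_def by auto
  have Nn: "nacost n ?f (\<lambda>_. 1) ?\<sigma> x \<le> real n"
    by (rule nacost_le[OF sig_take_all[OF x dl]]) (use sl in simp)
  have nn: "0 \<le> real K * real (cnt lst x)" "0 \<le> real K * ?m * indE K x"
    "0 \<le> real K * ?m * notf x" "0 \<le> real n * indE K x"
    by (auto simp: indE_def notf_def)
  show ?thesis
  proof (cases "?f x")
    case True
    show ?thesis
    proof (cases "\<exists>T\<in>set ?ls. full T x")
      case True
      obtain k T where k: "k \<le> K * cnt ?ls x" "T \<in> set ?ls" "full T x"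
        "T \<subseteq> set (take k (concat (map (blk K) ?ls)))"
      proof -
        have sm: "\<forall>T\<in>set ?ls. card T \<le> K" by simp
        show ?thesis using first_small[where K=K, OF sls sm True] that by blast
      qed
      have "set (take k (concat (map (blk K) ?ls))) \<subseteq> set (take k ?\<sigma>)"
        unfolding sig_def lsm_def by (simp add: take_append)
      hence "determined n ?f (set (take k ?\<sigma>)) x"
        using det_true[of T] k sls by blast
      hence N: "nacost n ?f (\<lambda>_. 1) ?\<sigma> x \<le> real K * real (cnt ?ls x)"
      proof -
        have "nacost n ?f (\<lambda>_. 1) ?\<sigma> x \<le> real k" by (rule nacost_le) fact
        also have "\<dots> \<le> real (K * cnt ?ls x)" using k(1) by (simp only: of_nat_le_iff)
        finally show ?thesis by simp
      qed
      have "real (cnt ?ls x) \<le> real (cnt lst x) + ?m * indE K x"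
      proof (cases "Evt K x")
        case False
        have "\<forall>T\<in>set lst. \<not> card T \<le> K \<longrightarrow> \<not> full T x"
          using full_large_Evt False lst unfolding perms_def by (auto simp: not_le)
        hence "cnt ?ls x \<le> cnt lst x" by (rule cnt_filter)
        thus ?thesis by (simp add: indE_def)
      next
        case True
        have "cnt ?ls x \<le> length ?ls" by (rule cnt_le_length)
        also have "\<dots> \<le> length lst" by simp
        finally show ?thesis using True lenlst by (simp add: indE_def)
      qed
      hence "real K * real (cnt ?ls x) \<le> real K * (real (cnt lst x) + ?m * indE K x)"
        by (rule mult_left_mono) simp
      hence "real K * real (cnt ?ls x) \<le> real K * real (cnt lst x) + real K * ?m * indE K x"
        by (simp only: distrib_left mult.assoc)
      thus ?thesis using N nn by linarith
    next
      case False
      obtain T where T: "T \<in> Ts" "full T x" using \<open>?f x\<close> unfolding dnf_eval_def full_def by blast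
      have "T \<in> set lst" using T lst unfolding perms_def by auto
      hence "K < card T" using False T by (auto simp: not_le[symmetric])
      hence "Evt K x" using full_large_Evt T by blast
      hence "real n * indE K x = real n" by (simp add: indE_def)
      thus ?thesis using Nn nn by linarith
    qed
  next
    case False
    show ?thesis
    proof (cases "Evt K x")
      case True
      hence "real n * indE K x = real n" by (simp add: indE_def)
      thus ?thesis using Nn nn by linarith
    next
      case nE: False
      have zero: "\<exists>i\<in>T \<inter> set (take (K * card Ts) ?\<sigma>). \<not> x i" if T: "T \<in> Ts" for T
      proof -
        have "\<not> full (set (blk K T)) x"
        proof (cases "card T \<le> K")
          case True
          thus ?thesis using blk_small[OF T True] False T unfolding dnf_eval_def full_def by blast
        next
          case False
          thus ?thesis using nE T unfolding Evt_def by (auto simp: not_le)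
        qed
        then obtain i where i: "i \<in> set (blk K T)" "\<not> x i" unfolding full_def by blast
        have "i \<in> set ?L" using i(1) T sl by auto
        moreover have "length ?L \<le> K * card Ts"
        proof -
          have "length (lsm K lst) = card Ts" using distinct_card[OF dl] sl by simp
          thus ?thesis using concat_blk_length[of K "lsm K lst"] by simp
        qed
        ultimately have "i \<in> set (take (K * card Ts) ?\<sigma>)"
          unfolding sig_def by (simp add: take_append)
        thus ?thesis using i blk_sub[OF T] by blast
      qed
      have "determined n ?f (set (take (K * card Ts) ?\<sigma>)) x" by (rule det_false) (use zero in blast)
      hence "nacost n ?f (\<lambda>_. 1) ?\<sigma> x \<le> real (K * card Ts)" by (rule nacost_le)
      hence a: "nacost n ?f (\<lambda>_. 1) ?\<sigma> x \<le> real K * ?m" by simp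
      have b: "real K * ?m * notf x = real K * ?m" using False by (simp add: notf_def)
      show ?thesis using a b nn by linarith
    qed
  qed
qed

end



context rodnf
begin

lemma EE_indE:
  "EE n (indE K) \<le> real (card Ts) * (1/2)^K"
proof -
  define g where "g T x = (if K < card T then ind (set (blk K T)) x else 0)" for T x
  have pt: "indE K x \<le> (\<Sum>T\<in>Ts. g T x)" for x
  proof (cases "Evt K x")
    case True
    then obtain T where T: "T \<in> Ts" "K < card T" "full (set (blk K T)) x" unfolding Evt_def by blast
    have "g T x = 1" unfolding g_def ind_def using T(2,3) by (simp add: full_def)
    moreover have "g T' x \<ge> 0" for T' unfolding g_def ind_def by simp
    ultimately have "1 \<le> (\<Sum>T\<in>Ts. g T x)"
      using member_le_sum[of T Ts "\<lambda>T. g T x"] finTs T(1) by simp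
    thus ?thesis using True by (simp add: indE_def)
  next
    case False
    have "g T' x \<ge> 0" for T' unfolding g_def ind_def by simp
    hence "0 \<le> (\<Sum>T\<in>Ts. g T x)" by (simp add: sum_nonneg)
    thus ?thesis using False by (simp add: indE_def)
  qed
  have each: "EE n (g T) \<le> (1/2)^K" if T: "T \<in> Ts" for T
  proof (cases "K < card T")
    case True
    have "g T = ind (set (blk K T))" unfolding g_def using True by (simp add: fun_eq_iff)
    moreover have "EE n (ind (set (blk K T))) = (1/2) ^ card (set (blk K T))"
      unfolding EE_def by (rule avg_ind) (use blk_sub[OF T] T_sub[OF T] z0_in in auto)
    ultimately show ?thesis using blk_card[OF T True] by simp
  next
    case False
    have "g T = (\<lambda>_. 0)" unfolding g_def using False by (simp add: fun_eq_iff)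
    thus ?thesis unfolding EE_def using avg_const[OF z0_in] by simp
  qed
  have "EE n (indE K) \<le> EE n (\<lambda>x. \<Sum>T\<in>Ts. g T x)"
    unfolding EE_def by (rule avg_mono) (rule pt)
  also have "\<dots> = (\<Sum>T\<in>Ts. EE n (g T))" unfolding EE_def by (rule avg_sum[OF finTs])
  also have "\<dots> \<le> (\<Sum>T\<in>Ts. (1/2)^K)" by (rule sum_mono) (rule each)
  also have "\<dots> = real (card Ts) * (1/2)^K" by simp
  finally show ?thesis .
qed

lemma EE_indE_nonneg: "0 \<le> EE n (indE K)"
proof -
  have "EE n (\<lambda>_. 0) \<le> EE n (indE K)" unfolding EE_def by (rule avg_mono) (simp add: indE_def)
  thus ?thesis unfolding EE_def using avg_const[OF z0_in] by simp
qed

lemma main_bound: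
  assumes lst: "lst \<in> perms Ts" "lcost lst = S Ts"
  shows "nacost_exp n (dnf_eval Ts) (\<lambda>_. 1) (\<lambda>_. 1/2) (sig K (lsm K lst))
    \<le> real K * S Ts + real K * real (card Ts) * EE n (indE K)
       + real K * real (card Ts) * EE n notf + real n * EE n (indE K)"
proof -
  let ?N = "nacost n (dnf_eval Ts) (\<lambda>_. 1) (sig K (lsm K lst))"
  have "EE n ?N \<le> EE n (\<lambda>x. real K * real (cnt lst x) + real K * real (card Ts) * indE K x
       + real K * real (card Ts) * notf x + real n * indE K x)"
    unfolding EE_def by (rule avg_mono) (rule perx[OF lst(1)], simp add: cset_empty)
  also have "\<dots> = real K * EE n (\<lambda>x. real (cnt lst x)) + real K * real (card Ts) * EE n (indE K)
       + real K * real (card Ts) * EE n notf + real n * EE n (indE K)"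
    unfolding EE_def by (simp only: avg_add avg_cmult mult.assoc)
  also have "EE n (\<lambda>x. real (cnt lst x)) = S Ts"
    unfolding EE_def using avg_cnt[OF ro _ _ z0_in] lst unfolding perms_def by auto
  finally show ?thesis unfolding nacost_exp_def expect_EE .
qed

lemma final_bound:
  assumes K: "real n ^ 2 \<le> 2 ^ K"
  shows "\<exists>\<sigma>. is_perm n \<sigma> \<and> nacost_exp n (dnf_eval Ts) (\<lambda>_. 1) (\<lambda>_. 1/2) \<sigma>
           \<le> (3 * real K + 1) * OPT_A n (dnf_eval Ts) (\<lambda>_. 1) (\<lambda>_. 1/2)"
proof -
  obtain lst where lst: "lst \<in> perms Ts" "lcost lst = S Ts" using S_attained[OF finTs] by blast
  let ?O = "OPT_A n (dnf_eval Ts) (\<lambda>_. 1) (\<lambda>_. 1/2)"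
  let ?m = "real (card Ts)" and ?e = "EE n (indE K)" and ?q = "(1/2::real)^K"
  have perm: "is_perm n (sig K (lsm K lst))" using sig_perm lsm_props[OF lst(1)] by simp
  have mb: "nacost_exp n (dnf_eval Ts) (\<lambda>_. 1) (\<lambda>_. 1/2) (sig K (lsm K lst))
    \<le> real K * S Ts + real K * ?m * ?e + real K * ?m * EE n notf + real n * ?e"
    by (rule main_bound[OF lst])
  have O1: "S Ts \<le> ?O" by (rule OPT_lower(1))
  have O2: "?m * EE n notf \<le> ?O" using OPT_lower(2) unfolding notf_def by simp
  have e0: "0 \<le> ?e" by (rule EE_indE_nonneg)
  have e1: "?e \<le> ?m * ?q" by (rule EE_indE)
  have q0: "0 \<le> ?q" by simp
  have mn: "?m \<le> real n" using card_Ts_le by simp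
  have nq: "real n * real n * ?q \<le> 1"
  proof -
    have "real n * real n * ?q = real n ^ 2 / 2 ^ K" by (simp add: power2_eq_square power_one_over)
    also have "\<dots> \<le> 1" using K by simp
    finally show ?thesis .
  qed
  have me: "?m * ?e \<le> 1"
  proof -
    have "?m * ?e \<le> ?m * (?m * ?q)" by (rule mult_left_mono[OF e1]) simp
    also have "\<dots> = (?m * ?m) * ?q" by simp
    also have "\<dots> \<le> (real n * real n) * ?q"
      by (rule mult_right_mono[OF mult_mono[OF mn mn] q0]) simp_all
    finally show ?thesis using nq by simp
  qed
  have ne: "real n * ?e \<le> 1"
  proof -
    have "real n * ?e \<le> real n * (?m * ?q)" by (rule mult_left_mono[OF e1]) simp
    also have "\<dots> = (real n * ?m) * ?q" by simp
    also have "\<dots> \<le> (real n * real n) * ?q"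
      by (rule mult_right_mono[OF mult_left_mono[OF mn] q0]) simp_all
    finally show ?thesis using nq by simp
  qed
  have t1: "real K * S Ts \<le> real K * ?O" by (rule mult_left_mono[OF O1]) simp
  have t3: "real K * ?m * EE n notf \<le> real K * ?O"
    using mult_left_mono[OF O2, of "real K"] by (simp add: mult.assoc)
  have t2: "real K * ?m * ?e \<le> real K" using mult_left_mono[OF me, of "real K"] by (simp add: mult.assoc)
  show ?thesis
  proof (cases "Ts = {}")
    case True
    have "?m = 0" using True by simp
    hence "?e \<le> 0" using e1 by simp
    hence "?e = 0" using e0 by simp
    moreover have "S Ts = 0" using True S_empty by simp
    ultimately have "nacost_exp n (dnf_eval Ts) (\<lambda>_. 1) (\<lambda>_. 1/2) (sig K (lsm K lst)) \<le> 0"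
      using mb \<open>?m = 0\<close> by simp
    moreover have "0 \<le> (3 * real K + 1) * ?O" using O1 \<open>S Ts = 0\<close> by simp
    ultimately show ?thesis using perm by (meson order_trans)
  next
    case False
    have O1': "1 \<le> ?O" using S_ge1[OF finTs False] O1 by simp
    have "real K \<le> real K * ?O" using mult_left_mono[OF O1', of "real K"] by simp
    hence "nacost_exp n (dnf_eval Ts) (\<lambda>_. 1) (\<lambda>_. 1/2) (sig K (lsm K lst))
        \<le> real K * ?O + real K * ?O + real K * ?O + ?O"
      using mb t1 t2 t3 ne O1' by linarith
    also have "\<dots> = (3 * real K + 1) * ?O" by (simp add: algebra_simps)
    finally show ?thesis using perm by blast
  qed
qed

end



lemma ln2_ge: "ln (2::real) \<ge> 1/2"
proof -
  have "norm (exp (1/2::real)) \<le> 2" by (rule exp_bound_half) simp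
  hence "exp (1/2::real) \<le> 2" by simp
  thus ?thesis by (subst ln_ge_iff) auto
qed

lemma K_props:
  assumes n: "n \<ge> (2::nat)"
  defines "K \<equiv> 2 * nat \<lceil>log 2 (real n)\<rceil>"
  shows "real n ^ 2 \<le> 2 ^ K" "3 * real K + 1 \<le> 30 * ln (real n)"
proof -
  let ?c = "\<lceil>log 2 (real n)\<rceil>"
  have nr: "real n \<ge> 2" using n by simp
  have l1: "log 2 (real n) \<ge> 1" using nr by simp
  hence c1: "?c \<ge> 1" by linarith
  have rc: "real (nat ?c) = real_of_int ?c" using c1 by simp
  have "real n = 2 powr (log 2 (real n))" using nr by simp
  also have "\<dots> \<le> 2 powr (real (nat ?c))" unfolding rc by (rule powr_mono) auto
  also have "\<dots> = 2 ^ nat ?c" by (simp add: powr_realpow)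
  finally have p: "real n \<le> 2 ^ nat ?c" .
  have "real n ^ 2 \<le> (2 ^ nat ?c) ^ 2" by (rule power_mono[OF p]) simp
  also have "\<dots> = 2 ^ K" unfolding K_def by (simp add: power_mult[symmetric] mult.commute)
  finally show "real n ^ 2 \<le> 2 ^ K" .
  have ln2: "ln (2::real) \<ge> 1/2" by (rule ln2_ge)
  have lnn: "ln (real n) \<ge> ln 2" using nr by simp
  have lnn0: "ln (real n) \<ge> 1/2" using ln2 lnn by linarith
  have lg: "log 2 (real n) \<le> 2 * ln (real n)"
  proof -
    have "log 2 (real n) = ln (real n) / ln 2" by (simp add: log_def)
    also have "\<dots> \<le> ln (real n) / (1/2)"
      using ln2 lnn0 by (intro divide_left_mono) auto
    finally show ?thesis by simp
  qed
  have "real K = 2 * real_of_int ?c" unfolding K_def using rc by simp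
  also have "\<dots> \<le> 2 * (log 2 (real n) + 1)" by (rule mult_left_mono[OF of_int_ceiling_le_add_one]) simp
  finally have "real K \<le> 2 * (log 2 (real n) + 1)" .
  hence a: "3 * real K + 1 \<le> 6 * log 2 (real n) + 7" by simp
  also have "\<dots> \<le> 12 * ln (real n) + 7" using lg by simp
  also have "\<dots> \<le> 30 * ln (real n)" using lnn0 by simp
  finally show "3 * real K + 1 \<le> 30 * ln (real n)" .
qed

theorem theorem1:
  shows "\<exists>C>0. \<forall>n\<ge>2. \<forall>Ts. read_once_dnf n Ts \<longrightarrow>
           (\<exists>\<sigma>. is_perm n \<sigma> \<and>
              nacost_exp n (dnf_eval Ts) (\<lambda>_. 1) (\<lambda>_. 1/2) \<sigma>
                \<le> C * ln (real n) * OPT_A n (dnf_eval Ts) (\<lambda>_. 1) (\<lambda>_. 1/2))"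
proof (intro exI[of _ "30::real"] conjI allI impI)
  fix n :: nat and Ts assume n: "2 \<le> n" and ro: "read_once_dnf n Ts"
  interpret rodnf n Ts by (rule rodnf.intro[OF ro])
  define K where "K = 2 * nat \<lceil>log 2 (real n)\<rceil>"
  have Kp: "real n ^ 2 \<le> 2 ^ K" "3 * real K + 1 \<le> 30 * ln (real n)"
    using K_props[OF n] unfolding K_def by auto
  obtain \<sigma> where s: "is_perm n \<sigma>"
    "nacost_exp n (dnf_eval Ts) (\<lambda>_. 1) (\<lambda>_. 1/2) \<sigma> \<le> (3 * real K + 1) * OPT_A n (dnf_eval Ts) (\<lambda>_. 1) (\<lambda>_. 1/2)"
    using final_bound[OF Kp(1)] by blast
  have O0: "0 \<le> OPT_A n (dnf_eval Ts) (\<lambda>_. 1) (\<lambda>_. 1/2)"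
    using OPT_lower(1) S_nonneg[OF finTs] by linarith
  have "(3 * real K + 1) * OPT_A n (dnf_eval Ts) (\<lambda>_. 1) (\<lambda>_. 1/2) \<le> 30 * ln (real n) * OPT_A n (dnf_eval Ts) (\<lambda>_. 1) (\<lambda>_. 1/2)"
    by (rule mult_right_mono[OF Kp(2) O0])
  thus "\<exists>\<sigma>. is_perm n \<sigma> \<and> nacost_exp n (dnf_eval Ts) (\<lambda>_. 1) (\<lambda>_. 1/2) \<sigma> \<le> 30 * ln (real n) * OPT_A n (dnf_eval Ts) (\<lambda>_. 1) (\<lambda>_. 1/2)"
    using s by (meson order_trans)
qed simp


end
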